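(* Let $n\ge2$ and let $T_0$ be a tagged $n$-simplex in $\mathbb R^n$. Every simplex $T$ obtained from $T_0$ by successive applications of Maubach's bisection satisfies $\gamma(T)\le 2n(n+\sqrt2-1)\,\gamma(T_0)$.
   Context: A tagged $n$-simplex is an ordered tuple of affinely independent vertices with a tag, written $[v_0,\dots,v_n]_\gamma$, $\gamma\in\{1,\dots,n\}$. Maubach's bisection: set $v'=(v_0+v_\gamma)/2$ and $\gamma'=\gamma-1$ if $\gamma\ge2$, $\gamma'=n$ if $\gamma=1$; the children are $[v_0,\dots,v_{\gamma-1},v',v_{\gamma+1},\dots,v_n]_{\gamma'}$ and $[v_1,\dots,v_\gamma,v',v_{\gamma+1},\dots,v_n]_{\gamma'}$. For a simplex $S$, $\gamma(S)=R(S)/r(S)$ where $R(S)$ is the diameter of the smallest ball containing $S$ and $r(S)$ the diameter of the largest ball contained in $S$. *)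

theory Defs
  imports "HOL-Analysis.Analysis"
begin

text \<open>A tagged n-simplex in R^n is represented by the list of its vertices
  [v_0,...,v_n] (0-indexed, length n+1) together with its tag gamma.\<close>

definition tagged_simplex :: "(real^'n) list \<Rightarrow> nat \<Rightarrow> bool" where
  "tagged_simplex vs g \<longleftrightarrow>
     length vs = CARD('n) + 1 \<and> distinct vs \<and> \<not> affine_dependent (set vs) \<and>
     1 \<le> g \<and> g \<le> CARD('n)"

definition maubach_mid :: "(real^'n) list \<Rightarrow> nat \<Rightarrow> real^'n" where
  "maubach_mid vs g = (1/2) *\<^sub>R (vs ! 0 + vs ! g)"

definition maubach_tag :: "(real^'n) list \<Rightarrow> nat \<Rightarrow> nat" where
  "maubach_tag vs g = (if 2 \<le> g then g - 1 else length vs - 1)"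

text \<open>First child [v_0,...,v_{gamma-1}, v', v_{gamma+1},...,v_n].\<close>
definition maubach_child1 :: "(real^'n) list \<Rightarrow> nat \<Rightarrow> (real^'n) list \<times> nat" where
  "maubach_child1 vs g = (take g vs @ [maubach_mid vs g] @ drop (g + 1) vs, maubach_tag vs g)"

text \<open>Second child [v_1,...,v_gamma, v', v_{gamma+1},...,v_n].\<close>
definition maubach_child2 :: "(real^'n) list \<Rightarrow> nat \<Rightarrow> (real^'n) list \<times> nat" where
  "maubach_child2 vs g = (drop 1 (take (g + 1) vs) @ [maubach_mid vs g] @ drop (g + 1) vs, maubach_tag vs g)"

inductive maubach_descendant :: "(real^'n) list \<times> nat \<Rightarrow> (real^'n) list \<times> nat \<Rightarrow> bool"
  for T0 where
  self: "maubach_descendant T0 T0"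
| child1: "maubach_descendant T0 (vs, g) \<Longrightarrow> maubach_descendant T0 (maubach_child1 vs g)"
| child2: "maubach_descendant T0 (vs, g) \<Longrightarrow> maubach_descendant T0 (maubach_child2 vs g)"

definition outer_diam :: "(real^'n) set \<Rightarrow> real" where
  "outer_diam S = 2 * Inf {r. \<exists>c. S \<subseteq> cball c r}"

definition inner_diam :: "(real^'n) set \<Rightarrow> real" where
  "inner_diam S = 2 * Sup {r. \<exists>c. 0 \<le> r \<and> cball c r \<subseteq> S}"

definition shape_ratio :: "(real^'n) list \<Rightarrow> real" where
  "shape_ratio vs = outer_diam (convex hull (set vs)) / inner_diam (convex hull (set vs))"

end

theory Submission
  imports Defs
begin

definition cc :: "nat \<Rightarrow> nat \<Rightarrow> real" where "cc g i = (if i \<le> g then 1 else 1/2)"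

definition isF :: "(real^'n) list \<Rightarrow> nat \<Rightarrow> real^'n \<Rightarrow> (nat \<Rightarrow> real^'n) \<Rightarrow> bool" where
  "isF vs g w D \<longleftrightarrow> length vs = CARD('n) + 1 \<and>
     (\<forall>i\<le>CARD('n). vs ! i = w + cc g i *\<^sub>R (\<Sum>j=1..i. D j))"

lemma half_lemma: fixes a b :: "'a::real_vector"
  shows "(1/2) *\<^sub>R (a + (a + b)) = a + (1/2) *\<^sub>R b"
proof -
  have "(1/2) *\<^sub>R (a + (a + b)) = ((1/2) *\<^sub>R a + (1/2) *\<^sub>R a) + (1/2) *\<^sub>R b"
    by (simp add: scaleR_add_right add.assoc)
  also have "(1/2) *\<^sub>R a + (1/2) *\<^sub>R a = ((1/2) + (1/2::real)) *\<^sub>R a"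
    by (simp only: scaleR_left_distrib)
  finally show ?thesis by simp
qed

lemma isF_0: "isF vs g w D \<Longrightarrow> vs ! 0 = w"
  unfolding isF_def by auto

lemma child1_big:
  fixes vs :: "(real^'n) list"
  assumes F: "isF vs g w D" and g: "2 \<le> g" "g \<le> CARD('n)"
  shows "isF (fst (maubach_child1 vs g)) (snd (maubach_child1 vs g)) w D
         \<and> snd (maubach_child1 vs g) = g - 1"
proof -
  have len: "length vs = CARD('n) + 1" using F unfolding isF_def by auto
  have e: "fst (maubach_child1 vs g) = vs[g := maubach_mid vs g]"
    using upd_conv_take_nth_drop[of g vs] len g unfolding maubach_child1_def by auto
  have t: "snd (maubach_child1 vs g) = g - 1" unfolding maubach_child1_def maubach_tag_def using g by auto
  have v0: "vs ! 0 = w" using isF_0[OF F] .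
  have vg: "vs ! g = w + (\<Sum>j=1..g. D j)" using F g unfolding isF_def cc_def by auto
  have "\<forall>i\<le>CARD('n). vs[g := maubach_mid vs g] ! i = w + cc (g-1) i *\<^sub>R (\<Sum>j=1..i. D j)"
  proof (intro allI impI)
    fix i assume i: "i \<le> CARD('n)"
    show "vs[g := maubach_mid vs g] ! i = w + cc (g-1) i *\<^sub>R (\<Sum>j=1..i. D j)"
    proof (cases "i = g")
      case True
      have m: "maubach_mid vs g = w + (1/2) *\<^sub>R (\<Sum>j=1..g. D j)"
        unfolding maubach_mid_def v0 vg by (rule half_lemma)
      have "cc (g-1) g = 1/2" using g unfolding cc_def by auto
      then show ?thesis using len g i m True by simp
    next
      case False
      then have "cc (g-1) i = cc g i" unfolding cc_def by auto
      then show ?thesis using False F i unfolding isF_def by auto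
    qed
  qed
  then show ?thesis using e t len unfolding isF_def by auto
qed

lemma alg2: fixes w a S :: "'a::real_vector"
  shows "w + a + (1/2) *\<^sub>R (S - 2 *\<^sub>R a) = w + (1/2) *\<^sub>R S"
  by (simp add: algebra_simps)

lemma alg3: fixes w a S :: "'a::real_vector"
  shows "w + a + (1/2) *\<^sub>R (S - 2 *\<^sub>R a) = (1/2) *\<^sub>R (w + (w + S))"
  by (simp only: alg2 half_lemma)

lemma alg4: fixes w a S :: "'a::real_vector"
  shows "w + a + (S - a) = w + S"
  by (simp add: algebra_simps)

lemma child1_small:
  fixes vs :: "(real^'n) list"
  assumes F: "isF vs 1 w D"
  shows "isF (fst (maubach_child1 vs 1)) (snd (maubach_child1 vs 1)) w (\<lambda>j. (1/2) *\<^sub>R D j)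
         \<and> snd (maubach_child1 vs 1) = CARD('n)"
proof -
  have len: "length vs = CARD('n) + 1" using F unfolding isF_def by auto
  have e: "fst (maubach_child1 vs 1) = vs[1 := maubach_mid vs 1]"
    using upd_conv_take_nth_drop[of 1 vs] len unfolding maubach_child1_def by auto
  have t: "snd (maubach_child1 vs 1) = CARD('n)" unfolding maubach_child1_def maubach_tag_def using len by auto
  have v0: "vs ! 0 = w" using isF_0[OF F] .
  have v1: "vs ! 1 = w + D 1" using F unfolding isF_def cc_def by auto
  have "\<forall>i\<le>CARD('n). vs[1 := maubach_mid vs 1] ! i = w + cc CARD('n) i *\<^sub>R (\<Sum>j=1..i. (1/2) *\<^sub>R D j)"
  proof (intro allI impI)
    fix i assume i: "i \<le> CARD('n)"
    have c1: "cc CARD('n) i = 1" using i unfolding cc_def by auto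
    show "vs[1 := maubach_mid vs 1] ! i = w + cc CARD('n) i *\<^sub>R (\<Sum>j=1..i. (1/2) *\<^sub>R D j)"
    proof (cases "i = 1")
      case True
      have m: "maubach_mid vs 1 = w + (1/2) *\<^sub>R D 1"
        unfolding maubach_mid_def v0 v1 by (rule half_lemma)
      then show ?thesis using len True c1 by simp
    next
      case False
      then have "i = 0 \<or> 2 \<le> i" by auto
      then show ?thesis
      proof
        assume "i = 0" then show ?thesis using v0 len by simp
      next
        assume i2: "2 \<le> i"
        have "cc 1 i = 1/2" using i2 unfolding cc_def by auto
        then have "vs ! i = w + (1/2) *\<^sub>R (\<Sum>j=1..i. D j)" using F i unfolding isF_def by auto
        then show ?thesis using False c1 len by (simp add: scaleR_sum_right)
      qed
    qed
  qed
  then show ?thesis using e t len unfolding isF_def by auto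
qed

lemma child2_nth:
  assumes "g + 1 \<le> length vs"
  shows "length (fst (maubach_child2 vs g)) = length vs"
    "i < length vs \<Longrightarrow> fst (maubach_child2 vs g) ! i =
      (if i < g then vs ! (i+1) else if i = g then maubach_mid vs g else vs ! i)"
  using assms unfolding maubach_child2_def
  by (auto simp: nth_append min_def)

definition sh :: "nat \<Rightarrow> (nat \<Rightarrow> 'a::real_vector) \<Rightarrow> nat \<Rightarrow> 'a" where
  "sh g D j = (if j < g then D (j+1) else if j = g then - D 1 else D j)"

lemma sh_sum:
  fixes D :: "nat \<Rightarrow> 'a::real_vector"
  assumes "1 \<le> g"
  shows "(\<Sum>j=1..k. sh g D j) = (if k < g then (\<Sum>j=1..k+1. D j) - D 1 else (\<Sum>j=1..k. D j) - 2 *\<^sub>R D 1)"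
proof (induction k)
  case 0
  then show ?case using assms by simp
next
  case (Suc k)
  show ?case
  proof (cases "Suc k < g")
    case True
    then show ?thesis using Suc by (simp add: sh_def algebra_simps)
  next
    case False
    show ?thesis
    proof (cases "Suc k = g")
      case True
      have a: "(\<Sum>j=1..Suc k. sh g D j) = (\<Sum>j=1..k. sh g D j) + sh g D (Suc k)" by simp
      have b: "sh g D (Suc k) = - D 1" using True unfolding sh_def by simp
      have c: "(\<Sum>j=1..k. sh g D j) = (\<Sum>j=1..Suc k. D j) - D 1" using Suc True by simp
      show ?thesis unfolding a b c using True by (simp add: algebra_simps scaleR_2)
    next
      case False
      then show ?thesis using Suc \<open>\<not> Suc k < g\<close> by (simp add: sh_def algebra_simps)
    qed
  qed
qed

lemma child2_big:
  fixes vs :: "(real^'n) list"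
  assumes F: "isF vs g w D" and g: "2 \<le> g" "g \<le> CARD('n)"
  shows "isF (fst (maubach_child2 vs g)) (snd (maubach_child2 vs g)) (w + D 1) (sh g D)
         \<and> snd (maubach_child2 vs g) = g - 1"
proof -
  have len: "length vs = CARD('n) + 1" using F unfolding isF_def by auto
  have t: "snd (maubach_child2 vs g) = g - 1" unfolding maubach_child2_def maubach_tag_def using g by auto
  have v0: "vs ! 0 = w" using isF_0[OF F] .
  have vg: "vs ! g = w + (\<Sum>j=1..g. D j)" using F g unfolding isF_def cc_def by auto
  have l2: "length (fst (maubach_child2 vs g)) = length vs" using child2_nth(1)[of g vs] len g by auto
  have "\<forall>i\<le>CARD('n). fst (maubach_child2 vs g) ! i = (w + D 1) + cc (g-1) i *\<^sub>R (\<Sum>j=1..i. sh g D j)"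
  proof (intro allI impI)
    fix i assume i: "i \<le> CARD('n)"
    have n: "fst (maubach_child2 vs g) ! i =
      (if i < g then vs ! (i+1) else if i = g then maubach_mid vs g else vs ! i)"
      using child2_nth(2)[of g vs i] len g i by auto
    have ss: "(\<Sum>j=1..i. sh g D j) = (if i < g then (\<Sum>j=1..i+1. D j) - D 1 else (\<Sum>j=1..i. D j) - 2 *\<^sub>R D 1)"
      using sh_sum[of g D i] g by auto
    consider "i < g" | "i = g" | "g < i" by linarith
    then show "fst (maubach_child2 vs g) ! i = (w + D 1) + cc (g-1) i *\<^sub>R (\<Sum>j=1..i. sh g D j)"
    proof cases
      case 1
      have "vs ! (i+1) = w + (\<Sum>j=1..i+1. D j)" using F 1 g unfolding isF_def cc_def by auto
      moreover have "cc (g-1) i = 1" using 1 unfolding cc_def by auto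
      ultimately show ?thesis using n ss 1 by (simp add: alg4)
    next
      case 2
      have m: "maubach_mid vs g = (1/2) *\<^sub>R (w + (w + (\<Sum>j=1..g. D j)))"
        unfolding maubach_mid_def v0 vg by simp
      have c: "cc (g-1) i = 1/2" using 2 g unfolding cc_def by auto
      have "fst (maubach_child2 vs g) ! i = maubach_mid vs g" using n 2 by simp
      also have "\<dots> = (w + D 1) + (1/2) *\<^sub>R ((\<Sum>j=1..g. D j) - 2 *\<^sub>R D 1)"
        unfolding m by (simp only: alg3)
      finally show ?thesis using ss c 2 by simp
    next
      case 3
      have v: "vs ! i = w + (1/2) *\<^sub>R (\<Sum>j=1..i. D j)" using F 3 i unfolding isF_def cc_def by auto
      have c: "cc (g-1) i = 1/2" using 3 unfolding cc_def by auto
      have "fst (maubach_child2 vs g) ! i = vs ! i" using n 3 by simp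
      also have "\<dots> = (w + D 1) + (1/2) *\<^sub>R ((\<Sum>j=1..i. D j) - 2 *\<^sub>R D 1)"
        unfolding v by (simp only: alg2)
      finally show ?thesis unfolding c ss using 3 by simp
    qed
  qed
  then show ?thesis using t len l2 unfolding isF_def by auto
qed

lemma child2_small:
  fixes vs :: "(real^'n) list"
  assumes F: "isF vs 1 w D"
  shows "isF (fst (maubach_child2 vs 1)) (snd (maubach_child2 vs 1)) (w + D 1) (\<lambda>j. (1/2) *\<^sub>R sh 1 D j)
         \<and> snd (maubach_child2 vs 1) = CARD('n)"
proof -
  have len: "length vs = CARD('n) + 1" using F unfolding isF_def by auto
  have t: "snd (maubach_child2 vs 1) = CARD('n)" unfolding maubach_child2_def maubach_tag_def using len by auto
  have v0: "vs ! 0 = w" using isF_0[OF F] .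
  have v1: "vs ! 1 = w + D 1" using F unfolding isF_def cc_def by auto
  have l2: "length (fst (maubach_child2 vs 1)) = length vs" using child2_nth(1)[of 1 vs] len by auto
  have "\<forall>i\<le>CARD('n). fst (maubach_child2 vs 1) ! i = (w + D 1) + cc CARD('n) i *\<^sub>R (\<Sum>j=1..i. (1/2) *\<^sub>R sh 1 D j)"
  proof (intro allI impI)
    fix i assume i: "i \<le> CARD('n)"
    have c1: "cc CARD('n) i = 1" using i unfolding cc_def by auto
    have n: "fst (maubach_child2 vs 1) ! i =
      (if i < 1 then vs ! (i+1) else if i = 1 then maubach_mid vs 1 else vs ! i)"
      using child2_nth(2)[of 1 vs i] len i by auto
    have ss: "(\<Sum>j=1..i. (1/2) *\<^sub>R sh 1 D j) = (1/2) *\<^sub>R (if i < 1 then (\<Sum>j=1..i+1. D j) - D 1 else (\<Sum>j=1..i. D j) - 2 *\<^sub>R D 1)"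
      using sh_sum[of 1 D i] by (simp add: scaleR_sum_right[symmetric])
    consider "i = 0" | "i = 1" | "1 < i" by linarith
    then show "fst (maubach_child2 vs 1) ! i = (w + D 1) + cc CARD('n) i *\<^sub>R (\<Sum>j=1..i. (1/2) *\<^sub>R sh 1 D j)"
    proof cases
      case 1
      then show ?thesis using n ss v1 c1 by simp
    next
      case 2
      have m: "maubach_mid vs 1 = (1/2) *\<^sub>R (w + (w + (\<Sum>j=1..1. D j)))"
        unfolding maubach_mid_def v0 v1 by simp
      have "fst (maubach_child2 vs 1) ! i = maubach_mid vs 1" using n 2 by simp
      also have "\<dots> = (w + D 1) + (1/2) *\<^sub>R ((\<Sum>j=1..1. D j) - 2 *\<^sub>R D 1)"
        unfolding m by (simp only: alg3)
      finally show ?thesis using ss c1 2 by simp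
    next
      case 3
      have "vs ! i = w + (1/2) *\<^sub>R (\<Sum>j=1..i. D j)" using F 3 i unfolding isF_def cc_def by auto
      then show ?thesis using n ss 3 c1 by (simp add: alg2)
    qed
  qed
  then show ?thesis using t len l2 unfolding isF_def by auto
qed

definition Inv :: "(nat \<Rightarrow> real^'n) \<Rightarrow> (real^'n) list \<Rightarrow> nat \<Rightarrow> bool" where
  "Inv D0 vs g \<longleftrightarrow> 1 \<le> g \<and> g \<le> CARD('n) \<and>
    (\<exists>w t \<pi> s. t > 0 \<and> bij_betw \<pi> {1..CARD('n)} {1..CARD('n)} \<and> (\<forall>j. s j = 1 \<or> s j = -1) \<and>
       isF vs g w (\<lambda>j. (s j * t) *\<^sub>R D0 (\<pi> j)))"

definition cyc :: "nat \<Rightarrow> nat \<Rightarrow> nat" where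
  "cyc g j = (if j < g then j + 1 else if j = g then 1 else j)"

lemma cyc_bij: assumes "1 \<le> g" "g \<le> m" shows "bij_betw (cyc g) {1..m} {1..m}"
proof (rule bij_betw_byWitness[where f' = "\<lambda>j. if j = 1 then g else if j \<le> g then j - 1 else j"])
  show "\<forall>a\<in>{1..m}. (if cyc g a = 1 then g else if cyc g a \<le> g then cyc g a - 1 else cyc g a) = a"
    using assms unfolding cyc_def by auto
  show "\<forall>a'\<in>{1..m}. cyc g (if a' = 1 then g else if a' \<le> g then a' - 1 else a') = a'"
    using assms unfolding cyc_def by auto
  show "cyc g ` {1..m} \<subseteq> {1..m}" using assms unfolding cyc_def by auto
  show "(\<lambda>j. if j = 1 then g else if j \<le> g then j - 1 else j) ` {1..m} \<subseteq> {1..m}"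
    using assms by auto
qed

lemma sh_form:
  "sh g (\<lambda>j. (s j * t) *\<^sub>R D0 (\<pi> j)) = (\<lambda>j. ((if j = g then - s 1 else s (cyc g j)) * t) *\<^sub>R D0 ((\<pi> \<circ> cyc g) j))"
  unfolding sh_def cyc_def by (auto simp: fun_eq_iff)

lemma desc_inv:
  fixes vs0 :: "(real^'n) list"
  assumes F0: "isF vs0 g0 (vs0 ! 0) D0" and g0: "1 \<le> g0" "g0 \<le> CARD('n)"
    and d: "maubach_descendant (vs0, g0) T"
  shows "Inv D0 (fst T) (snd T)"
  using d
proof (induction T rule: maubach_descendant.induct)
  case self
  have "isF vs0 g0 (vs0 ! 0) (\<lambda>j. ((\<lambda>_. 1) j * 1) *\<^sub>R D0 (id j))" using F0 by simp
  moreover have "bij_betw id {1..CARD('n)} {1..CARD('n)}" by simp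
  moreover have "\<forall>j. (\<lambda>_. 1::real) j = 1 \<or> (\<lambda>_. 1::real) j = -1" by simp
  ultimately have "\<exists>w t \<pi> s. t > 0 \<and> bij_betw \<pi> {1..CARD('n)} {1..CARD('n)} \<and> (\<forall>j. s j = 1 \<or> s j = -1) \<and>
       isF vs0 g0 w (\<lambda>j. (s j * t) *\<^sub>R D0 (\<pi> j))"
    by (intro exI[of _ "vs0 ! 0"] exI[of _ "1::real"] exI[of _ id] exI[of _ "\<lambda>_. 1::real"]) simp
  then show ?case unfolding Inv_def using g0 by simp
next
  case (child1 vs g)
  then obtain w t \<pi> s where g: "1 \<le> g" "g \<le> CARD('n)" and t: "t > 0" and \<pi>: "bij_betw \<pi> {1..CARD('n)} {1..CARD('n)}"
    and s: "\<forall>j. s j = 1 \<or> s j = -1" and F: "isF vs g w (\<lambda>j. (s j * t) *\<^sub>R D0 (\<pi> j))"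
    unfolding Inv_def by auto
  show ?case
  proof (cases "g = 1")
    case True
    have "(\<lambda>j. (1/2) *\<^sub>R ((s j * t) *\<^sub>R D0 (\<pi> j))) = (\<lambda>j. (s j * (t/2)) *\<^sub>R D0 (\<pi> j))" by (auto simp: fun_eq_iff)
    then show ?thesis using child1_small[of vs w "\<lambda>j. (s j * t) *\<^sub>R D0 (\<pi> j)"] F True t \<pi> s
      unfolding Inv_def by (auto intro!: exI[of _ w] exI[of _ "t/2"] exI[of _ \<pi>] exI[of _ s])
  next
    case False
    then show ?thesis using child1_big[of vs g w "\<lambda>j. (s j * t) *\<^sub>R D0 (\<pi> j)"] F g t \<pi> s
      unfolding Inv_def by (auto intro!: exI[of _ w] exI[of _ "t"] exI[of _ \<pi>] exI[of _ s])
  qed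
next
  case (child2 vs g)
  then obtain w t \<pi> s where g: "1 \<le> g" "g \<le> CARD('n)" and t: "t > 0" and \<pi>: "bij_betw \<pi> {1..CARD('n)} {1..CARD('n)}"
    and s: "\<forall>j. s j = 1 \<or> s j = -1" and F: "isF vs g w (\<lambda>j. (s j * t) *\<^sub>R D0 (\<pi> j))"
    unfolding Inv_def by auto
  define s' where "s' = (\<lambda>j. if j = g then - s 1 else s (cyc g j))"
  have s': "\<forall>j. s' j = 1 \<or> s' j = -1" using s unfolding s'_def by auto
  have \<pi>': "bij_betw (\<pi> \<circ> cyc g) {1..CARD('n)} {1..CARD('n)}"
    using bij_betw_trans[OF cyc_bij[OF g] \<pi>] .
  have shf: "sh g (\<lambda>j. (s j * t) *\<^sub>R D0 (\<pi> j)) = (\<lambda>j. (s' j * t) *\<^sub>R D0 ((\<pi> \<circ> cyc g) j))"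
    unfolding s'_def by (rule sh_form)
  show ?case
  proof (cases "g = 1")
    case True
    have "(\<lambda>j. (1/2) *\<^sub>R sh g (\<lambda>j. (s j * t) *\<^sub>R D0 (\<pi> j)) j) = (\<lambda>j. (s' j * (t/2)) *\<^sub>R D0 ((\<pi> \<circ> cyc g) j))"
      unfolding shf by (auto simp: fun_eq_iff)
    then show ?thesis using child2_small[of vs w "\<lambda>j. (s j * t) *\<^sub>R D0 (\<pi> j)"] F True t \<pi>' s'
      unfolding Inv_def by (auto intro!: exI[of _ "w + (s 1 * t) *\<^sub>R D0 (\<pi> 1)"] exI[of _ "t/2"] exI[of _ "\<pi> \<circ> cyc g"] exI[of _ s'])
  next
    case False
    then show ?thesis using child2_big[of vs g w "\<lambda>j. (s j * t) *\<^sub>R D0 (\<pi> j)"] F g t \<pi>' s' shf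
      unfolding Inv_def by (auto intro!: exI[of _ "w + (s 1 * t) *\<^sub>R D0 (\<pi> 1)"] exI[of _ "t"] exI[of _ "\<pi> \<circ> cyc g"] exI[of _ s'])
  qed
qed

lemma outer_le_gen:
  fixes S :: "(real^'n) set"
  assumes "S \<noteq> {}" "S \<subseteq> cball C \<rho>"
  shows "outer_diam S \<le> 2 * \<rho>"
proof -
  have "Inf {r. \<exists>c. S \<subseteq> cball c r} \<le> \<rho>"
  proof (rule cInf_lower)
    show "\<rho> \<in> {r. \<exists>c. S \<subseteq> cball c r}" using assms by auto
    show "bdd_below {r. \<exists>c. S \<subseteq> cball c r}"
    proof (rule bdd_belowI[of _ 0])
      fix r assume "r \<in> {r. \<exists>c. S \<subseteq> cball c r}"
      then obtain c where "S \<subseteq> cball c r" by auto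
      then have "cball c r \<noteq> {}" using assms(1) by auto
      then show "0 \<le> r" by simp
    qed
  qed
  then show ?thesis unfolding outer_diam_def by simp
qed

lemma outer_ge_gen:
  fixes S :: "(real^'n) set"
  assumes "bounded S" "x \<in> S" "y \<in> S"
  shows "dist x y \<le> outer_diam S"
proof -
  have "dist x y / 2 \<le> Inf {r. \<exists>c. S \<subseteq> cball c r}"
  proof (rule cInf_greatest)
    obtain e c where "S \<subseteq> cball c e" using assms(1) bounded_subset_cball by blast
    then show "{r. \<exists>c. S \<subseteq> cball c r} \<noteq> {}" by auto
    fix r assume "r \<in> {r. \<exists>c. S \<subseteq> cball c r}"
    then obtain c where "S \<subseteq> cball c r" by auto
    then have "dist c x \<le> r" "dist c y \<le> r" using assms by auto
    then have "dist x y \<le> 2 * r" using dist_triangle[of x y c] by (simp add: dist_commute)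
    then show "dist x y / 2 \<le> r" by simp
  qed
  then show ?thesis unfolding outer_diam_def by simp
qed

lemma inner_ge_gen:
  fixes S :: "(real^'n) set"
  assumes "bounded S" "cball C \<rho> \<subseteq> S" "0 \<le> \<rho>"
  shows "2 * \<rho> \<le> inner_diam S"
proof -
  have "\<rho> \<le> Sup {r. \<exists>c. 0 \<le> r \<and> cball c r \<subseteq> S}"
  proof (rule cSup_upper)
    show "\<rho> \<in> {r. \<exists>c. 0 \<le> r \<and> cball c r \<subseteq> S}" using assms by auto
    obtain e x where ex: "S \<subseteq> cball x e" using assms(1) bounded_subset_cball by blast
    show "bdd_above {r. \<exists>c. 0 \<le> r \<and> cball c r \<subseteq> S}"
    proof (rule bdd_aboveI[of _ e])
      fix r assume "r \<in> {r. \<exists>c. 0 \<le> r \<and> cball c r \<subseteq> S}"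
      then obtain c where "0 \<le> r" "cball c r \<subseteq> cball x e" using ex by auto
      then show "r \<le> e" using cball_subset_cball_iff[of c r x e] by (smt (verit) zero_le_dist)
    qed
  qed
  then show ?thesis unfolding inner_diam_def by simp
qed

lemma inner_le_gen:
  fixes S :: "(real^'n) set"
  assumes "S \<noteq> {}" "\<And>c r. 0 \<le> r \<Longrightarrow> cball c r \<subseteq> S \<Longrightarrow> 2 * r \<le> B"
  shows "inner_diam S \<le> B"
proof -
  have "Sup {r. \<exists>c. 0 \<le> r \<and> cball c r \<subseteq> S} \<le> B / 2"
  proof (rule cSup_least)
    obtain x where "x \<in> S" using assms(1) by auto
    then have "cball x 0 \<subseteq> S" by simp
    then have "0 \<in> {r. \<exists>c. 0 \<le> r \<and> cball c r \<subseteq> S}" by blast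
    then show "{r. \<exists>c. 0 \<le> r \<and> cball c r \<subseteq> S} \<noteq> {}" by blast
    fix r assume "r \<in> {r. \<exists>c. 0 \<le> r \<and> cball c r \<subseteq> S}"
    then obtain c where "0 \<le> r" "cball c r \<subseteq> S" by auto
    then show "r \<le> B / 2" using assms(2) by force
  qed
  then show ?thesis unfolding inner_diam_def by simp
qed

lemma isF_vertex_sum:
  fixes vs :: "(real^'n) list"
  assumes F: "isF vs g w D" and i: "i \<le> CARD('n)"
  shows "vs ! i = w + (\<Sum>j=1..CARD('n). (if j \<le> i then cc g i else 0) *\<^sub>R D j)"
proof -
  have "(\<Sum>j=1..CARD('n). (if j \<le> i then cc g i else 0) *\<^sub>R D j) = (\<Sum>j\<in>{1..i}. cc g i *\<^sub>R D j)"
    using i by (intro sum.mono_neutral_cong_right) auto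
  then show ?thesis using F i unfolding isF_def by (simp add: scaleR_sum_right)
qed

lemma set_isF: fixes vs :: "(real^'n) list" shows "isF vs g w D \<Longrightarrow> x \<in> set vs \<Longrightarrow> \<exists>i\<le>CARD('n). x = vs ! i"
proof -
  assume F: "isF vs g w D" and x: "x \<in> set vs"
  then obtain i where "i < length vs" "x = vs ! i" by (auto simp: in_set_conv_nth)
  then show ?thesis using F unfolding isF_def by (intro exI[of _ i]) auto
qed

lemma outer_le:
  fixes vs :: "(real^'n) list"
  assumes F: "isF vs g w D"
  shows "outer_diam (convex hull (set vs)) \<le> (\<Sum>j=1..CARD('n). cc g j * norm (D j))"
proof -
  define C where "C = w + (\<Sum>j=1..CARD('n). (cc g j / 2) *\<^sub>R D j)"
  define \<rho> where "\<rho> = (\<Sum>j=1..CARD('n). (cc g j / 2) * norm (D j))"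
  have "set vs \<subseteq> cball C \<rho>"
  proof
    fix x assume "x \<in> set vs"
    then obtain i where i: "i \<le> CARD('n)" "x = vs ! i" using set_isF[OF F] by auto
    have "C - x = (\<Sum>j=1..CARD('n). (cc g j / 2 - (if j \<le> i then cc g i else 0)) *\<^sub>R D j)"
      unfolding C_def i(2) isF_vertex_sum[OF F i(1)] by (simp add: sum_subtractf scaleR_diff_left)
    also have "norm \<dots> \<le> (\<Sum>j=1..CARD('n). norm ((cc g j / 2 - (if j \<le> i then cc g i else 0)) *\<^sub>R D j))"
      by (rule norm_sum)
    also have "\<dots> \<le> \<rho>" unfolding \<rho>_def
    proof (rule sum_mono)
      fix j assume "j \<in> {1..CARD('n)}"
      have "\<bar>cc g j / 2 - (if j \<le> i then cc g i else 0)\<bar> \<le> cc g j / 2"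
        unfolding cc_def by auto
      then show "norm ((cc g j / 2 - (if j \<le> i then cc g i else 0)) *\<^sub>R D j) \<le> cc g j / 2 * norm (D j)"
        unfolding norm_scaleR by (rule mult_right_mono) simp
    qed
    finally show "x \<in> cball C \<rho>" by (simp add: dist_norm)
  qed
  then have "convex hull (set vs) \<subseteq> cball C \<rho>" by (simp add: convex_cball hull_minimal)
  moreover have "convex hull (set vs) \<noteq> {}" using F unfolding isF_def by auto
  ultimately have "outer_diam (convex hull (set vs)) \<le> 2 * \<rho>" using outer_le_gen by blast
  also have "2 * \<rho> = (\<Sum>j=1..CARD('n). cc g j * norm (D j))" unfolding \<rho>_def by (simp add: sum_distrib_left)
  finally show ?thesis .
qed

lemma abel_sum:
  fixes f :: "nat \<Rightarrow> real" and D :: "nat \<Rightarrow> 'a::real_vector"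
  shows "(\<Sum>i=1..m. (f i - f (i+1)) *\<^sub>R (\<Sum>j=1..i. D j)) = (\<Sum>j=1..m. (f j - f (m+1)) *\<^sub>R D j)"
proof (induction m)
  case 0
  then show ?case by simp
next
  case (Suc m)
  define c where "c = f (Suc m) - f (Suc m + 1)"
  have "(\<Sum>i=1..Suc m. (f i - f (i+1)) *\<^sub>R (\<Sum>j=1..i. D j))
      = (\<Sum>j=1..m. (f j - f (m+1)) *\<^sub>R D j) + c *\<^sub>R ((\<Sum>j=1..m. D j) + D (Suc m))"
    using Suc unfolding c_def by simp
  also have "\<dots> = ((\<Sum>j=1..m. (f j - f (m+1)) *\<^sub>R D j) + (\<Sum>j=1..m. c *\<^sub>R D j)) + c *\<^sub>R D (Suc m)"
    by (simp only: scaleR_add_right scaleR_sum_right add.assoc)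
  also have "\<dots> = (\<Sum>j=1..m. (f j - f (m+1)) *\<^sub>R D j + c *\<^sub>R D j) + c *\<^sub>R D (Suc m)"
    by (simp only: sum.distrib)
  also have "\<dots> = (\<Sum>j=1..m. (f j - f (Suc m+1)) *\<^sub>R D j) + c *\<^sub>R D (Suc m)"
  proof -
    have "(f j - f (m+1)) *\<^sub>R D j + c *\<^sub>R D j = (f j - f (Suc m+1)) *\<^sub>R D j" for j
      unfolding c_def scaleR_left_distrib[symmetric] by simp
    then show ?thesis by simp
  qed
  also have "\<dots> = (\<Sum>j=1..Suc m. (f j - f (Suc m+1)) *\<^sub>R D j)" unfolding c_def by simp
  finally show ?case .
qed

lemma lam_sum_aux:
  fixes Y :: "nat \<Rightarrow> real"
  shows "(\<Sum>i=1..m. (Y i - Y (i+1)) / cc g i) = (if m \<le> g then Y 1 - Y (m+1) else Y 1 + Y (g+1) - 2 * Y (m+1))"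
proof (induction m)
  case 0
  then show ?case by simp
next
  case (Suc m)
  then show ?case by (cases "Suc m \<le> g"; cases "m = g") (auto simp: cc_def)
qed

definition Px :: "(nat \<Rightarrow> real^'n) \<Rightarrow> nat \<Rightarrow> real^'n" where
  "Px \<Phi> k = (if k \<le> CARD('n) then \<Phi> k else 0)"

definition Nc :: "nat \<Rightarrow> (nat \<Rightarrow> real^'n) \<Rightarrow> nat \<Rightarrow> real" where
  "Nc g \<Phi> i = (if i = 0 then norm (\<Phi> 1) + norm (Px \<Phi> (g+1)) else (norm (\<Phi> i) + norm (Px \<Phi> (i+1))) / cc g i)"

definition NN :: "nat \<Rightarrow> (nat \<Rightarrow> real^'n) \<Rightarrow> real" where
  "NN g \<Phi> = (\<Sum>i=0..CARD('n). Nc g \<Phi> i)"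

lemma cc_pos: "0 < cc g i" unfolding cc_def by auto

lemma Nc_nonneg: "0 \<le> Nc g \<Phi> i" unfolding Nc_def using cc_pos[of g i] by auto

lemma inner_ge:
  fixes vs :: "(real^'n) list" and \<Phi> D :: "nat \<Rightarrow> real^'n"
  assumes F: "isF vs g w D" and g: "1 \<le> g" "g \<le> CARD('n)"
    and bio: "\<forall>i\<in>{1..CARD('n)}. \<forall>j\<in>{1..CARD('n)}. \<Phi> i \<bullet> D j = (if i = j then 1 else 0)"
    and rec: "\<forall>x. x = (\<Sum>j=1..CARD('n). (\<Phi> j \<bullet> x) *\<^sub>R D j)"
  shows "0 < NN g \<Phi> \<and> 2 / NN g \<Phi> \<le> inner_diam (convex hull (set vs))"
proof -
  let ?n = "CARD('n)"
  define N where "N = NN g \<Phi>"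
  have n1: "1 \<le> ?n" using g by simp
  have "\<Phi> 1 \<bullet> D 1 = 1" using bio n1 by auto
  then have "\<Phi> 1 \<noteq> 0" by auto
  then have "0 < Nc g \<Phi> 0" unfolding Nc_def by (simp add: add_pos_nonneg)
  moreover have "Nc g \<Phi> 0 \<le> N" unfolding N_def NN_def
    by (rule member_le_sum) (auto simp: Nc_nonneg)
  ultimately have Npos: "0 < N" by simp
  define Y where "Y = (\<lambda>x k. Px \<Phi> k \<bullet> (x - w))"
  define lam where "lam = (\<lambda>x i. if i = 0 then 1 - Y x 1 - Y x (g+1) else (Y x i - Y x (i+1)) / cc g i)"
  have Yn: "Y x (?n+1) = 0" for x unfolding Y_def Px_def by simp
  have sum1: "(\<Sum>i=0..?n. lam x i) = 1" for x
  proof -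
    have "(\<Sum>i=0..?n. lam x i) = lam x 0 + (\<Sum>i=1..?n. lam x i)"
      by (simp add: sum.atLeast_Suc_atMost)
    also have "(\<Sum>i=1..?n. lam x i) = (\<Sum>i=1..?n. (Y x i - Y x (i+1)) / cc g i)"
      unfolding lam_def by (intro sum.cong) auto
    also have "\<dots> = Y x 1 + Y x (g+1)"
      unfolding lam_sum_aux using g Yn[of x] by auto
    finally show ?thesis unfolding lam_def by simp
  qed
  have comb: "(\<Sum>i=0..?n. lam x i *\<^sub>R vs ! i) = x" for x
  proof -
    have "(\<Sum>i=0..?n. lam x i *\<^sub>R vs ! i) = (\<Sum>i=0..?n. lam x i *\<^sub>R w + (lam x i * cc g i) *\<^sub>R (\<Sum>j=1..i. D j))"
      using F unfolding isF_def by (intro sum.cong) (auto simp: scaleR_add_right)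
    also have "\<dots> = (\<Sum>i=0..?n. lam x i) *\<^sub>R w + (\<Sum>i=0..?n. (lam x i * cc g i) *\<^sub>R (\<Sum>j=1..i. D j))"
      by (simp add: sum.distrib scaleR_sum_left)
    also have "(\<Sum>i=0..?n. (lam x i * cc g i) *\<^sub>R (\<Sum>j=1..i. D j)) = (\<Sum>i=1..?n. (Y x i - Y x (i+1)) *\<^sub>R (\<Sum>j=1..i. D j))"
    proof -
      have "(\<Sum>i=0..?n. (lam x i * cc g i) *\<^sub>R (\<Sum>j=1..i. D j)) = (lam x 0 * cc g 0) *\<^sub>R (\<Sum>j=1..0. D j) + (\<Sum>i=1..?n. (lam x i * cc g i) *\<^sub>R (\<Sum>j=1..i. D j))"
        by (simp add: sum.atLeast_Suc_atMost)
      also have "\<dots> = (\<Sum>i=1..?n. (Y x i - Y x (i+1)) *\<^sub>R (\<Sum>j=1..i. D j))"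
      proof -
        have "lam x i * cc g i = Y x i - Y x (i+1)" if "i \<in> {1..?n}" for i
          unfolding lam_def using that cc_pos[of g i] by auto
        then show ?thesis by simp
      qed
      finally show ?thesis .
    qed
    also have "\<dots> = (\<Sum>j=1..?n. (Y x j) *\<^sub>R D j)" unfolding abel_sum Yn by simp
    also have "\<dots> = (\<Sum>j=1..?n. (\<Phi> j \<bullet> (x - w)) *\<^sub>R D j)" unfolding Y_def Px_def by (intro sum.cong) auto
    also have "\<dots> = x - w" using rec by metis
    finally show ?thesis unfolding sum1 by simp
  qed
  define \<mu> where "\<mu> = (\<lambda>i. Nc g \<Phi> i / N)"
  define \<eta> where "\<eta> = (\<lambda>k. \<Sum>i=k..?n. cc g i * \<mu> i)"
  define C where "C = w + (\<Sum>j=1..?n. \<eta> j *\<^sub>R D j)"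
  have YC: "Y C k = \<eta> k" if "1 \<le> k" "k \<le> ?n + 1" for k
  proof (cases "k \<le> ?n")
    case True
    have "Y C k = (\<Sum>j=1..?n. \<eta> j * (\<Phi> k \<bullet> D j))"
      unfolding Y_def Px_def C_def using True by (simp add: inner_sum_right)
    also have "\<dots> = (\<Sum>j=1..?n. if j = k then \<eta> j else 0)"
      using bio True that by (intro sum.cong) auto
    also have "\<dots> = \<eta> k" using True that by simp
    finally show ?thesis .
  next
    case False
    then have "k = ?n + 1" using that by simp
    then show ?thesis unfolding \<eta>_def using Yn by simp
  qed
  have lamC: "lam C i = \<mu> i" if "1 \<le> i" "i \<le> ?n" for i
  proof -
    have "\<eta> i = cc g i * \<mu> i + \<eta> (i+1)" unfolding \<eta>_def using that by (simp add: sum.atLeast_Suc_atMost)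
    then show ?thesis unfolding lam_def using that YC[of i] YC[of "i+1"] cc_pos[of g i] by auto
  qed
  have sum\<mu>: "(\<Sum>i=0..?n. \<mu> i) = 1" unfolding \<mu>_def using Npos unfolding N_def NN_def
    by (simp add: sum_divide_distrib[symmetric])
  have lamC0: "lam C 0 = \<mu> 0"
  proof -
    have "lam C 0 + (\<Sum>i=1..?n. lam C i) = 1" using sum1[of C] by (simp add: sum.atLeast_Suc_atMost)
    moreover have "(\<Sum>i=1..?n. lam C i) = (\<Sum>i=1..?n. \<mu> i)" using lamC by (intro sum.cong) auto
    moreover have "\<mu> 0 + (\<Sum>i=1..?n. \<mu> i) = 1" using sum\<mu> by (simp add: sum.atLeast_Suc_atMost)
    ultimately show ?thesis by simp
  qed
  have Yz: "Y (C + z) k = Y C k + Px \<Phi> k \<bullet> z" for z k unfolding Y_def by (simp add: algebra_simps inner_add_right inner_diff_right)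
  have cs: "- (norm a * norm z) \<le> a \<bullet> z" for a z :: "real^'n"
    using Cauchy_Schwarz_ineq2[of a z] by linarith
  have cs2: "a \<bullet> z \<le> norm a * norm z" for a z :: "real^'n"
    using Cauchy_Schwarz_ineq2[of a z] by linarith
  have lamz: "lam C i - Nc g \<Phi> i * norm z \<le> lam (C + z) i" if "i \<le> ?n" for i z
  proof (cases "i = 0")
    case True
    have p1: "Px \<Phi> 1 = \<Phi> 1" unfolding Px_def using n1 by simp
    have "lam (C + z) i = lam C i - (\<Phi> 1 \<bullet> z) - (Px \<Phi> (g+1) \<bullet> z)"
      unfolding lam_def Yz True p1 by simp
    moreover have "\<Phi> 1 \<bullet> z \<le> norm (\<Phi> 1) * norm z" by (rule cs2)
    moreover have "Px \<Phi> (g+1) \<bullet> z \<le> norm (Px \<Phi> (g+1)) * norm z" by (rule cs2)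
    ultimately show ?thesis unfolding Nc_def using True by (simp add: algebra_simps)
  next
    case False
    have pi: "Px \<Phi> i = \<Phi> i" unfolding Px_def using that by simp
    have "lam (C + z) i = lam C i + (\<Phi> i \<bullet> z - Px \<Phi> (i+1) \<bullet> z) / cc g i"
      unfolding lam_def Yz pi using False by (simp add: diff_divide_distrib add_divide_distrib)
    moreover have XX: "- ((norm (\<Phi> i) + norm (Px \<Phi> (i+1))) * norm z) \<le> \<Phi> i \<bullet> z - Px \<Phi> (i+1) \<bullet> z"
      using cs[of "\<Phi> i" z] cs2[of "Px \<Phi> (i+1)" z] by (simp add: algebra_simps)
    have "- ((norm (\<Phi> i) + norm (Px \<Phi> (i+1))) * norm z) / cc g i \<le> (\<Phi> i \<bullet> z - Px \<Phi> (i+1) \<bullet> z) / cc g i"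
      using divide_right_mono[OF XX, of "cc g i"] cc_pos[of g i] by simp
    ultimately have "lam C i - ((norm (\<Phi> i) + norm (Px \<Phi> (i+1))) * norm z) / cc g i \<le> lam (C + z) i"
      using minus_divide_left[of "(norm (\<Phi> i) + norm (Px \<Phi> (i+1))) * norm z" "cc g i"] by linarith
    then show ?thesis unfolding Nc_def using False by (simp add: algebra_simps)
  qed
  have ball: "cball C (1 / N) \<subseteq> convex hull (set vs)"
  proof
    fix x assume "x \<in> cball C (1 / N)"
    then have nz: "norm (x - C) \<le> 1 / N" by (simp add: dist_norm norm_minus_commute)
    have xe: "x = C + (x - C)" by simp
    have nonneg: "0 \<le> lam x i" if "i \<in> {0..?n}" for i
    proof -
      have "lam C i - Nc g \<Phi> i * norm (x - C) \<le> lam x i" using lamz[of i "x - C"] that by simp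
      moreover have "lam C i = Nc g \<Phi> i / N" using lamC lamC0 that unfolding \<mu>_def by (cases "i = 0") auto
      moreover have "Nc g \<Phi> i * norm (x - C) \<le> Nc g \<Phi> i * (1 / N)"
        using nz Nc_nonneg by (rule mult_left_mono)
      ultimately show ?thesis by simp
    qed
    have "(\<Sum>i=0..?n. lam x i *\<^sub>R vs ! i) \<in> convex hull (set vs)"
    proof (rule convex_sum)
      show "finite {0..?n}" by simp
      show "convex (convex hull (set vs))" by simp
      show "sum (lam x) {0..?n} = 1" by (rule sum1)
      show "\<And>i. i \<in> {0..?n} \<Longrightarrow> 0 \<le> lam x i" by (rule nonneg)
      fix i assume "i \<in> {0..?n}"
      then have "i < length vs" using F unfolding isF_def by auto
      then show "vs ! i \<in> convex hull (set vs)" by (intro hull_inc nth_mem)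
    qed
    then show "x \<in> convex hull (set vs)" using comb by simp
  qed
  have "bounded (convex hull (set vs))" by (simp add: bounded_convex_hull finite_imp_bounded)
  then have "2 * (1 / N) \<le> inner_diam (convex hull (set vs))"
    using inner_ge_gen[OF _ ball] Npos by simp
  then show ?thesis using Npos unfolding N_def by simp
qed

lemma NN_bound:
  fixes \<Phi> :: "nat \<Rightarrow> real^'n"
  assumes g: "1 \<le> g" "g \<le> CARD('n)"
  shows "NN g \<Phi> \<le> 5/2 * (\<Sum>j=1..CARD('n). norm (\<Phi> j) / cc g j)"
proof -
  let ?n = "CARD('n)"
  define M where "M = (\<lambda>k. norm (Px \<Phi> k) / cc g k)"
  define S where "S = (\<Sum>j=1..?n. M j)"
  have S_eq: "S = (\<Sum>j=1..?n. norm (\<Phi> j) / cc g j)" unfolding S_def M_def Px_def by (intro sum.cong) auto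
  have Mnn: "0 \<le> M k" for k unfolding M_def using cc_pos[of g k] by simp
  have Mn1: "M (?n+1) = 0" unfolding M_def Px_def by simp
  have ccmono: "cc g (i+1) \<le> cc g i" for i unfolding cc_def by auto
  have b1: "Nc g \<Phi> i \<le> M i + M (i+1)" if "1 \<le> i" "i \<le> ?n" for i
  proof -
    have "norm (Px \<Phi> (i+1)) / cc g i \<le> norm (Px \<Phi> (i+1)) / cc g (i+1)"
      using ccmono[of i] cc_pos[of g "i+1"] by (intro divide_left_mono) auto
    then show ?thesis unfolding Nc_def M_def Px_def using that by (simp add: add_divide_distrib)
  qed
  have b0: "Nc g \<Phi> 0 = M 1 + (1/2) * M (g+1)"
    unfolding Nc_def M_def Px_def cc_def using g by auto
  have "NN g \<Phi> = Nc g \<Phi> 0 + (\<Sum>i=1..?n. Nc g \<Phi> i)" unfolding NN_def by (simp add: sum.atLeast_Suc_atMost)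
  also have "(\<Sum>i=1..?n. Nc g \<Phi> i) \<le> (\<Sum>i=1..?n. M i + M (i+1))" using b1 by (intro sum_mono) auto
  also have "(\<Sum>i=1..?n. M i + M (i+1)) = S + (\<Sum>i=1..?n. M (Suc i))" unfolding S_def by (simp add: sum.distrib)
  also have "(\<Sum>i=1..?n. M (Suc i)) = (\<Sum>i=Suc 1..Suc ?n. M i)" by (rule sum.shift_bounds_cl_Suc_ivl[symmetric])
  also have "\<dots> = S - M 1 + M (?n + 1)"
  proof -
    have "(\<Sum>i=1..Suc ?n. M i) = M 1 + (\<Sum>i=Suc 1..Suc ?n. M i)" by (simp add: sum.atLeast_Suc_atMost)
    moreover have "(\<Sum>i=1..Suc ?n. M i) = S + M (Suc ?n)" unfolding S_def by simp
    ultimately show ?thesis by simp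
  qed
  finally have "NN g \<Phi> \<le> 2 * S + (1/2) * M (g+1)" unfolding b0 Mn1 by simp
  moreover have "M (g+1) \<le> S"
  proof (cases "g + 1 \<le> ?n")
    case True
    then show ?thesis unfolding S_def using Mnn by (intro member_le_sum) auto
  next
    case False
    then have "M (g+1) = 0" unfolding M_def Px_def by simp
    then show ?thesis unfolding S_def using Mnn by (simp add: sum_nonneg)
  qed
  ultimately show ?thesis unfolding S_eq[symmetric] by simp
qed

lemma kant:
  fixes q :: "nat \<Rightarrow> real"
  assumes "finite A" "\<And>j. j \<in> A \<Longrightarrow> 1/2 \<le> q j \<and> q j \<le> 2"
  shows "(\<Sum>j\<in>A. q j) * (\<Sum>j\<in>A. 1 / q j) \<le> 25/16 * (card A)^2"
proof -
  have p: "q j + 1 / q j \<le> 5/2" if "j \<in> A" for j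
  proof -
    have a: "1/2 \<le> q j" "q j \<le> 2" using assms(2)[OF that] by auto
    then have "0 \<le> (2 - q j) * (2 * q j - 1)" by simp
    then have h: "2 * (q j * q j) + 2 \<le> 5 * q j" by (simp add: algebra_simps)
    have qp: "0 < q j" using a by linarith
    have "q j + 1 / q j = (q j * q j + 1) / q j" using qp by (simp add: field_simps)
    also have "\<dots> \<le> 5/2" using h qp by (simp add: divide_le_eq)
    finally show ?thesis .
  qed
  define X where "X = (\<Sum>j\<in>A. q j)"
  define Z where "Z = (\<Sum>j\<in>A. 1 / q j)"
  have "X + Z = (\<Sum>j\<in>A. q j + 1 / q j)" unfolding X_def Z_def by (simp add: sum.distrib)
  also have "\<dots> \<le> (\<Sum>j\<in>A. 5/2)" using p by (intro sum_mono) auto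
  finally have s: "X + Z \<le> 5/2 * card A" by simp
  have qpos: "0 < q j" if "j \<in> A" for j
  proof -
    have "1/2 \<le> q j" using assms(2)[OF that] by blast
    then show ?thesis by linarith
  qed
  have "0 \<le> X" unfolding X_def by (rule sum_nonneg) (simp add: qpos less_imp_le)
  have "0 \<le> Z" unfolding Z_def by (rule sum_nonneg) (simp add: qpos less_imp_le)
  have e: "(X + Z)^2 / 4 - X * Z = (X - Z)^2 / 4" by (simp add: power2_eq_square algebra_simps)
  have "0 \<le> (X - Z)^2 / 4" by simp
  then have "X * Z \<le> (X + Z)^2 / 4" using e by linarith
  also have "\<dots> \<le> (5/2 * card A)^2 / 4" using s \<open>0 \<le> X\<close> \<open>0 \<le> Z\<close> by (intro divide_right_mono power_mono) auto
  also have "\<dots> = 25/16 * (card A)^2" by (simp add: power2_eq_square)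
  finally show ?thesis unfolding X_def Z_def .
qed

lemma telescope_isF:
  fixes u :: "nat \<Rightarrow> 'a::real_vector"
  assumes "u 0 = 0"
  shows "(\<Sum>j=1..i. (1 / cc g j) *\<^sub>R u j - (1 / cc g (j - 1)) *\<^sub>R u (j - 1)) = (1 / cc g i) *\<^sub>R u i"
proof (induction i)
  case 0
  then show ?case using assms by simp
next
  case (Suc i)
  then show ?case by simp
qed

lemma T0_setup:
  fixes vs0 :: "(real^'n) list"
  assumes ts: "tagged_simplex vs0 g0"
  shows "\<exists>D0 \<Phi>0. isF vs0 g0 (vs0 ! 0) D0 \<and>
     (\<forall>i\<in>{1..CARD('n)}. \<forall>j\<in>{1..CARD('n)}. \<Phi>0 i \<bullet> D0 j = (if i = j then 1 else 0)) \<and>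
     (\<forall>x. x = (\<Sum>j=1..CARD('n). (\<Phi>0 j \<bullet> x) *\<^sub>R D0 j))"
proof -
  let ?n = "CARD('n)"
  have len: "length vs0 = ?n + 1" and dist: "distinct vs0" and ind: "\<not> affine_dependent (set vs0)"
    and g0: "1 \<le> g0" "g0 \<le> ?n"
    using ts unfolding tagged_simplex_def by auto
  define w where "w = vs0 ! 0"
  define u where "u = (\<lambda>i. vs0 ! i - w)"
  define D0 where "D0 = (\<lambda>j. (1 / cc g0 j) *\<^sub>R u j - (1 / cc g0 (j - 1)) *\<^sub>R u (j - 1))"
  have u0: "u 0 = 0" unfolding u_def w_def by simp
  have F: "isF vs0 g0 w D0"
    unfolding isF_def
  proof (intro conjI allI impI)
    show "length vs0 = ?n + 1" by (rule len)
    fix i assume i: "i \<le> ?n"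
    have "(\<Sum>j=1..i. D0 j) = (1 / cc g0 i) *\<^sub>R u i" unfolding D0_def by (rule telescope_isF[where u=u, OF u0])
    then show "vs0 ! i = w + cc g0 i *\<^sub>R (\<Sum>j=1..i. D0 j)"
      using cc_pos[of g0 i] unfolding u_def by simp
  qed
  define a where "a = (\<lambda>i l. if l \<le> i then cc g0 i else 0)"
  have inj: "inj_on u {1..?n}"
  proof (rule inj_onI)
    fix i j assume "i \<in> {1..?n}" "j \<in> {1..?n}" "u i = u j"
    then have "vs0 ! i = vs0 ! j" "i < length vs0" "j < length vs0" unfolding u_def using len by auto
    then show "i = j" using dist nth_eq_iff_index_eq by blast
  qed
  define B where "B = u ` {1..?n}"
  have setv: "set vs0 = insert w ((\<lambda>i. vs0 ! i) ` {1..?n})"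
  proof -
    have "set vs0 = (\<lambda>i. vs0 ! i) ` {0..<length vs0}" unfolding set_conv_nth by auto
    also have "{0..<length vs0} = {0..?n}" using len by auto
    also have "{0..?n} = insert 0 {1..?n}" by auto
    finally show ?thesis unfolding w_def by simp
  qed
  have wn: "w \<notin> (\<lambda>i. vs0 ! i) ` {1..?n}"
  proof
    assume "w \<in> (\<lambda>i. vs0 ! i) ` {1..?n}"
    then obtain i where "i \<in> {1..?n}" "vs0 ! i = vs0 ! 0" unfolding w_def by auto
    then show False using dist len nth_eq_iff_index_eq[of vs0 i 0] by auto
  qed
  have "\<not> dependent ((\<lambda>x. - w + x) ` ((\<lambda>i. vs0 ! i) ` {1..?n}))"
    using ind affine_dependent_iff_dependent[OF wn] setv by simp
  moreover have "(\<lambda>x. - w + x) ` ((\<lambda>i. vs0 ! i) ` {1..?n}) = B"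
    unfolding B_def u_def by (auto simp: image_image)
  ultimately have indB: "independent B" by simp
  have cardB: "card B = ?n" unfolding B_def using card_image[OF inj] by simp
  have spanB: "span B = UNIV"
    using dim_eq_full[of B] dim_eq_card_independent[OF indB] cardB by simp
  have "\<forall>l. \<exists>p. \<forall>i\<in>{1..?n}. p \<bullet> u i = a i l"
  proof
    fix l
    obtain h where h: "linear h" "\<forall>x\<in>B. h x = a (inv_into {1..?n} u x) l"
      using linear_independent_extend[OF indB, of "\<lambda>x. a (inv_into {1..?n} u x) l"] by (elim exE conjE) simp
    have "\<forall>i\<in>{1..?n}. adjoint h 1 \<bullet> u i = a i l"
    proof
      fix i assume i: "i \<in> {1..?n}"
      have "adjoint h 1 \<bullet> u i = h (u i) * 1" using adjoint_works[OF h(1), of "u i" 1] by (simp add: inner_commute)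
      also have "\<dots> = a i l" using h(2) i inv_into_f_f[OF inj i] unfolding B_def by simp
      finally show "adjoint h 1 \<bullet> u i = a i l" .
    qed
    then show "\<exists>p. \<forall>i\<in>{1..?n}. p \<bullet> u i = a i l" by blast
  qed
  then have "\<exists>\<Phi>0. \<forall>l. \<forall>i\<in>{1..?n}. \<Phi>0 l \<bullet> u i = a i l" by (rule choice)
  then obtain \<Phi>0 where \<Phi>0: "\<forall>l. \<forall>i\<in>{1..?n}. \<Phi>0 l \<bullet> u i = a i l" by blast
  have \<Phi>0': "\<Phi>0 l \<bullet> u i = a i l" if "1 \<le> l" "i \<le> ?n" for l i
  proof (cases "i = 0")
    case True
    then show ?thesis using u0 that unfolding a_def by simp
  next
    case False
    then show ?thesis using \<Phi>0 that by auto
  qed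
  have bio: "\<forall>i\<in>{1..?n}. \<forall>j\<in>{1..?n}. \<Phi>0 i \<bullet> D0 j = (if i = j then 1 else 0)"
  proof (intro ballI)
    fix l j assume l: "l \<in> {1..?n}" and j: "j \<in> {1..?n}"
    have "\<Phi>0 l \<bullet> D0 j = (1 / cc g0 j) * a j l - (1 / cc g0 (j - 1)) * a (j - 1) l"
    proof -
      have e1: "\<Phi>0 l \<bullet> u j = a j l" using \<Phi>0'[of l j] l j by auto
      have e2: "\<Phi>0 l \<bullet> u (j - 1) = a (j - 1) l" using \<Phi>0'[of l "j - 1"] l j by auto
      show ?thesis unfolding D0_def inner_diff_right inner_scaleR_right e1 e2 by simp
    qed
    also have "\<dots> = (if l = j then 1 else 0)"
      unfolding a_def using cc_pos[of g0 j] cc_pos[of g0 "j - 1"] l j by (cases "l \<le> j - 1") auto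
    finally show "\<Phi>0 l \<bullet> D0 j = (if l = j then 1 else 0)" .
  qed
  have linL: "linear (\<lambda>x. \<Sum>j=1..?n. (\<Phi>0 j \<bullet> x) *\<^sub>R D0 j)"
    by (intro linear_compose_sum ballI bounded_linear.linear bounded_linear_compose[OF bounded_linear_scaleR_left] bounded_linear_inner_right)
  have onB: "(\<Sum>j=1..?n. (\<Phi>0 j \<bullet> x) *\<^sub>R D0 j) = id x" if xB: "x \<in> B" for x
  proof -
    obtain i where i: "i \<in> {1..?n}" "x = u i" using xB unfolding B_def by auto
    have "(\<Sum>j=1..?n. (\<Phi>0 j \<bullet> u i) *\<^sub>R D0 j) = (\<Sum>j=1..?n. a i j *\<^sub>R D0 j)"
      using \<Phi>0' i by (intro sum.cong) auto
    also have "\<dots> = vs0 ! i - w"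
      using isF_vertex_sum[OF F, of i] i unfolding a_def by simp
    finally show ?thesis using i unfolding u_def by simp
  qed
  have recon: "\<forall>x. x = (\<Sum>j=1..?n. (\<Phi>0 j \<bullet> x) *\<^sub>R D0 j)"
  proof
    fix x :: "real^'n"
    have "x \<in> span B" using spanB by simp
    then have "(\<Sum>j=1..?n. (\<Phi>0 j \<bullet> x) *\<^sub>R D0 j) = id x"
      using linear_eq_on_span[OF linL linear_id onB] by blast
    then show "x = (\<Sum>j=1..?n. (\<Phi>0 j \<bullet> x) *\<^sub>R D0 j)" by simp
  qed
  show ?thesis using F bio recon unfolding w_def by blast
qed

lemma alg5: fixes w S :: "'a::real_vector"
  shows "(1 - t) *\<^sub>R w + t *\<^sub>R (w + c *\<^sub>R S) = w + (t * c) *\<^sub>R S"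
  by (simp add: algebra_simps)

lemma alg6: fixes w S D :: "'a::real_vector"
  shows "(w + a *\<^sub>R (S + D)) - (w + a *\<^sub>R S) = a *\<^sub>R D"
  by (simp add: algebra_simps)

lemma cc_mono: "i \<le> j \<Longrightarrow> cc g j \<le> cc g i" unfolding cc_def by auto

lemma T0_E:
  fixes vs0 :: "(real^'n) list"
  assumes F: "isF vs0 g0 w D0" and l: "1 \<le> l" "l \<le> CARD('n)"
  shows "cc g0 l * norm (D0 l) \<le> outer_diam (convex hull (set vs0))"
proof -
  define \<theta> where "\<theta> = cc g0 l / cc g0 (l - 1)"
  have \<theta>: "0 \<le> \<theta>" "\<theta> \<le> 1" unfolding \<theta>_def using cc_pos[of g0 l] cc_pos[of g0 "l - 1"] cc_mono[of "l - 1" l g0]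
    by auto
  have len: "length vs0 = CARD('n) + 1" using F unfolding isF_def by auto
  have vl: "vs0 ! l = w + cc g0 l *\<^sub>R (\<Sum>j=1..l. D0 j)" using F l unfolding isF_def by auto
  have vl1: "vs0 ! (l - 1) = w + cc g0 (l - 1) *\<^sub>R (\<Sum>j=1..l - 1. D0 j)" using F l unfolding isF_def by auto
  have v0: "vs0 ! 0 = w" using isF_0[OF F] .
  define q where "q = (1 - \<theta>) *\<^sub>R vs0 ! 0 + \<theta> *\<^sub>R vs0 ! (l - 1)"
  have mem: "vs0 ! i \<in> convex hull (set vs0)" if "i \<le> CARD('n)" for i
    using that len by (intro hull_inc nth_mem) auto
  have qin: "q \<in> convex hull (set vs0)" unfolding q_def
    using \<theta> mem[of 0] mem[of "l - 1"] l by (intro convexD) auto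
  have sl: "(\<Sum>j=1..l. D0 j) = (\<Sum>j=1..l - 1. D0 j) + D0 l"
  proof -
    obtain m where m: "l = Suc m" using l by (cases l) auto
    show ?thesis unfolding m by simp
  qed
  have "q = w + (\<theta> * cc g0 (l - 1)) *\<^sub>R (\<Sum>j=1..l - 1. D0 j)"
    unfolding q_def v0 vl1 by (rule alg5)
  also have "\<theta> * cc g0 (l - 1) = cc g0 l" unfolding \<theta>_def using cc_pos[of g0 "l - 1"] by simp
  finally have qe: "q = w + cc g0 l *\<^sub>R (\<Sum>j=1..l - 1. D0 j)" .
  have "vs0 ! l - q = cc g0 l *\<^sub>R D0 l" unfolding vl qe sl by (rule alg6)
  then have "dist (vs0 ! l) q = cc g0 l * norm (D0 l)" using cc_pos[of g0 l] by (simp add: dist_norm)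
  moreover have "bounded (convex hull (set vs0))" by (simp add: bounded_convex_hull finite_imp_bounded)
  ultimately show ?thesis using outer_ge_gen[of "convex hull (set vs0)" "vs0 ! l" q] mem[of l] qin l by simp
qed

lemma T0_H:
  fixes vs0 :: "(real^'n) list"
  assumes F: "isF vs0 g0 w D0" and l: "1 \<le> l" "l \<le> CARD('n)"
    and bio: "\<forall>i\<in>{1..CARD('n)}. \<forall>j\<in>{1..CARD('n)}. \<Phi>0 i \<bullet> D0 j = (if i = j then 1 else 0)"
  shows "\<Phi>0 l \<noteq> 0 \<and> inner_diam (convex hull (set vs0)) \<le> cc g0 l / norm (\<Phi>0 l)"
proof -
  let ?P = "\<Phi>0 l"
  have "?P \<bullet> D0 l = 1" using bio l by auto
  then have P0: "?P \<noteq> 0" by auto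
  then have Pn: "0 < norm ?P" by simp
  define K where "K = {y. ?P \<bullet> y \<ge> ?P \<bullet> w} \<inter> {y. ?P \<bullet> y \<le> cc g0 l + ?P \<bullet> w}"
  have cK: "convex K" unfolding K_def by (intro convex_Int convex_halfspace_ge convex_halfspace_le)
  have "set vs0 \<subseteq> K"
  proof
    fix x assume "x \<in> set vs0"
    then obtain i where i: "i \<le> CARD('n)" "x = vs0 ! i" using set_isF[OF F] by auto
    have "?P \<bullet> (\<Sum>j=1..i. D0 j) = (\<Sum>j=1..i. ?P \<bullet> D0 j)" by (simp add: inner_sum_right)
    also have "\<dots> = (\<Sum>j=1..i. if l = j then 1 else 0)" using bio l i by (intro sum.cong) auto
    also have "\<dots> = (if l \<le> i then 1 else 0)" using l by simp
    finally have "?P \<bullet> x = ?P \<bullet> w + cc g0 i * (if l \<le> i then 1 else 0)"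
      using F i unfolding isF_def by (simp add: inner_add_right)
    moreover have "l \<le> i \<Longrightarrow> cc g0 i \<le> cc g0 l" by (rule cc_mono)
    ultimately show "x \<in> K" unfolding K_def using cc_pos[of g0 i] cc_pos[of g0 l] by auto
  qed
  then have hK: "convex hull (set vs0) \<subseteq> K" using cK by (simp add: hull_minimal)
  have "inner_diam (convex hull (set vs0)) \<le> cc g0 l / norm ?P"
  proof (rule inner_le_gen)
    show "convex hull (set vs0) \<noteq> {}" using F unfolding isF_def by auto
    fix c r assume r: "0 \<le> r" and sub: "cball c r \<subseteq> convex hull (set vs0)"
    define e where "e = (1 / norm ?P) *\<^sub>R ?P"
    have ne: "norm e = 1" unfolding e_def using Pn by simp
    have "c + r *\<^sub>R e \<in> K" "c - r *\<^sub>R e \<in> K"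
      using sub hK r ne by (auto simp: dist_norm subset_iff)
    then have "?P \<bullet> (c + r *\<^sub>R e) \<le> cc g0 l + ?P \<bullet> w" "?P \<bullet> w \<le> ?P \<bullet> (c - r *\<^sub>R e)"
      unfolding K_def by auto
    moreover have "?P \<bullet> e = norm ?P" unfolding e_def using Pn by (simp add: power2_norm_eq_inner[symmetric] power2_eq_square)
    ultimately have "2 * r * norm ?P \<le> cc g0 l" by (simp add: inner_add_right inner_diff_right algebra_simps)
    then show "2 * r \<le> cc g0 l / norm ?P" using Pn by (simp add: le_divide_eq)
  qed
  then show ?thesis using P0 by simp
qed

lemma outer_nonneg:
  fixes vs :: "(real^'n) list"
  assumes "vs \<noteq> []"
  shows "0 \<le> outer_diam (convex hull (set vs))"
proof -
  have "hd vs \<in> convex hull (set vs)" using assms by (intro hull_inc) simp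
  moreover have "bounded (convex hull (set vs))" by (simp add: bounded_convex_hull finite_imp_bounded)
  ultimately show ?thesis using outer_ge_gen[of _ "hd vs" "hd vs"] by simp
qed

theorem theoremA1:
  fixes vs0 vs :: "(real^'n) list" and g0 g :: nat
  assumes "CARD('n) \<ge> 2"
    and "tagged_simplex vs0 g0"
    and "maubach_descendant (vs0, g0) (vs, g)"
  shows "shape_ratio vs \<le>
           2 * real CARD('n) * (real CARD('n) + sqrt 2 - 1) * shape_ratio vs0"
proof -
  let ?n = "CARD('n)"
  let ?I = "{1..?n}"
  have g0: "1 \<le> g0" "g0 \<le> ?n" using assms(2) unfolding tagged_simplex_def by auto
  obtain D0 \<Phi>0 where F0: "isF vs0 g0 (vs0 ! 0) D0"
    and bio0: "\<forall>i\<in>?I. \<forall>j\<in>?I. \<Phi>0 i \<bullet> D0 j = (if i = j then 1 else 0)"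
    and rec0: "\<forall>x. x = (\<Sum>j=1..?n. (\<Phi>0 j \<bullet> x) *\<^sub>R D0 j)"
    using T0_setup[OF assms(2)] by blast
  have "Inv D0 vs g" using desc_inv[OF F0 g0 assms(3)] by simp
  then obtain w t \<pi> s where g: "1 \<le> g" "g \<le> ?n" and t: "t > 0" and \<pi>: "bij_betw \<pi> ?I ?I"
    and s: "\<forall>j. s j = 1 \<or> s j = -1" and F: "isF vs g w (\<lambda>j. (s j * t) *\<^sub>R D0 (\<pi> j))"
    unfolding Inv_def by blast
  define D where "D = (\<lambda>j. (s j * t) *\<^sub>R D0 (\<pi> j))"
  define \<Phi> where "\<Phi> = (\<lambda>j. (s j / t) *\<^sub>R \<Phi>0 (\<pi> j))"
  have ss: "s j * s j = 1" for j using s by (metis mult_1 mult_minus1 minus_minus)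
  have as: "\<bar>s j\<bar> = 1" for j using s by (metis abs_1 abs_minus_cancel)
  have \<pi>in: "\<pi> j \<in> ?I" if "j \<in> ?I" for j using \<pi> that bij_betwE by blast
  have \<pi>inj: "inj_on \<pi> ?I" using \<pi> bij_betw_imp_inj_on by blast
  have bio: "\<forall>i\<in>?I. \<forall>j\<in>?I. \<Phi> i \<bullet> D j = (if i = j then 1 else 0)"
  proof (intro ballI)
    fix i j assume i: "i \<in> ?I" and j: "j \<in> ?I"
    have "\<Phi> i \<bullet> D j = (s i / t) * (s j * t) * (\<Phi>0 (\<pi> i) \<bullet> D0 (\<pi> j))"
      unfolding \<Phi>_def D_def by simp
    also have "\<Phi>0 (\<pi> i) \<bullet> D0 (\<pi> j) = (if i = j then 1 else 0)"
      using bio0 \<pi>in[OF i] \<pi>in[OF j] \<pi>inj i j by (auto dest: inj_onD)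
    finally show "\<Phi> i \<bullet> D j = (if i = j then 1 else 0)" using t ss[of i] by (cases "i = j") simp_all
  qed
  have rec: "\<forall>x. x = (\<Sum>j=1..?n. (\<Phi> j \<bullet> x) *\<^sub>R D j)"
  proof
    fix x :: "real^'n"
    have "(\<Sum>j=1..?n. (\<Phi> j \<bullet> x) *\<^sub>R D j) = (\<Sum>j=1..?n. (\<Phi>0 (\<pi> j) \<bullet> x) *\<^sub>R D0 (\<pi> j))"
    proof (rule sum.cong)
      fix j
      have "(\<Phi> j \<bullet> x) *\<^sub>R D j = ((s j / t) * (s j * t) * (\<Phi>0 (\<pi> j) \<bullet> x)) *\<^sub>R D0 (\<pi> j)"
        unfolding \<Phi>_def D_def by (simp add: mult.assoc mult.left_commute)
      also have "(s j / t) * (s j * t) = 1" using t ss[of j] by simp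
      finally show "(\<Phi> j \<bullet> x) *\<^sub>R D j = (\<Phi>0 (\<pi> j) \<bullet> x) *\<^sub>R D0 (\<pi> j)" by simp
    qed simp
    also have "\<dots> = (\<Sum>l=1..?n. (\<Phi>0 l \<bullet> x) *\<^sub>R D0 l)"
      using sum.reindex_bij_betw[OF \<pi>, of "\<lambda>l. (\<Phi>0 l \<bullet> x) *\<^sub>R D0 l"] by simp
    finally show "x = (\<Sum>j=1..?n. (\<Phi> j \<bullet> x) *\<^sub>R D j)" using rec0 by simp
  qed
  have FD: "isF vs g w D" using F unfolding D_def .
  define R0 where "R0 = outer_diam (convex hull (set vs0))"
  define r0 where "r0 = inner_diam (convex hull (set vs0))"
  define RT where "RT = outer_diam (convex hull (set vs))"
  define rT where "rT = inner_diam (convex hull (set vs))"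
  define NT where "NT = NN g \<Phi>"
  have r0pos: "0 < r0"
  proof -
    have "0 < NN g0 \<Phi>0 \<and> 2 / NN g0 \<Phi>0 \<le> r0" unfolding r0_def using inner_ge[OF F0 g0 bio0 rec0] .
    then show ?thesis by (smt (verit) divide_pos_pos)
  qed
  have NT: "0 < NT" "2 / NT \<le> rT" unfolding NT_def rT_def using inner_ge[OF FD g bio rec] by auto
  define q where "q = (\<lambda>j. cc g j / cc g0 (\<pi> j))"
  have qb: "1/2 \<le> q j \<and> q j \<le> 2" for j unfolding q_def cc_def by auto
  have E0: "cc g0 l * norm (D0 l) \<le> R0" if "l \<in> ?I" for l
    unfolding R0_def using T0_E[OF F0] that by auto
  have H0: "norm (\<Phi>0 l) \<le> cc g0 l / r0" if "l \<in> ?I" for l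
  proof -
    have "\<Phi>0 l \<noteq> 0 \<and> r0 \<le> cc g0 l / norm (\<Phi>0 l)" unfolding r0_def using T0_H[OF F0 _ _ bio0] that by auto
    then have "0 < norm (\<Phi>0 l)" "r0 \<le> cc g0 l / norm (\<Phi>0 l)" by auto
    then have "r0 * norm (\<Phi>0 l) \<le> cc g0 l" by (simp add: le_divide_eq mult.commute)
    then show ?thesis using r0pos by (simp add: le_divide_eq mult.commute)
  qed
  define X where "X = (\<Sum>j=1..?n. q j)"
  define Z where "Z = (\<Sum>j=1..?n. 1 / q j)"
  have qpos: "0 < q j" for j using qb[of j] by linarith
  have X0: "0 \<le> X" unfolding X_def by (rule sum_nonneg) (simp add: qpos less_imp_le)
  have Z0: "0 \<le> Z" unfolding Z_def by (rule sum_nonneg) (simp add: qpos less_imp_le)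
  have "length vs0 = ?n + 1" using F0 unfolding isF_def by simp
  then have "vs0 \<noteq> []" by auto
  then have R00: "0 \<le> R0" unfolding R0_def by (rule outer_nonneg)
  have "length vs = ?n + 1" using F unfolding isF_def by simp
  then have "vs \<noteq> []" by auto
  then have RT0: "0 \<le> RT" unfolding RT_def by (rule outer_nonneg)
  have RTb: "RT \<le> t * R0 * X"
  proof -
    have "RT \<le> (\<Sum>j=1..?n. cc g j * norm (D j))" unfolding RT_def by (rule outer_le[OF FD])
    also have "\<dots> \<le> (\<Sum>j=1..?n. t * R0 * q j)"
    proof (rule sum_mono)
      fix j assume j: "j \<in> ?I"
      have "cc g j * norm (D j) = t * q j * (cc g0 (\<pi> j) * norm (D0 (\<pi> j)))"
        unfolding D_def q_def using as[of j] t cc_pos[of g0 "\<pi> j"] by (simp add: abs_mult)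
      also have "\<dots> \<le> t * q j * R0" using E0[OF \<pi>in[OF j]] t qpos[of j] by (intro mult_left_mono) auto
      finally show "cc g j * norm (D j) \<le> t * R0 * q j" by (simp add: mult_ac)
    qed
    also have "\<dots> = t * R0 * X" unfolding X_def by (simp add: sum_distrib_left)
    finally show ?thesis .
  qed
  have NTb: "NT \<le> 5/2 / (t * r0) * Z"
  proof -
    have "NT \<le> 5/2 * (\<Sum>j=1..?n. norm (\<Phi> j) / cc g j)" unfolding NT_def by (rule NN_bound[OF g])
    also have "(\<Sum>j=1..?n. norm (\<Phi> j) / cc g j) \<le> (\<Sum>j=1..?n. 1 / (t * r0) * (1 / q j))"
    proof (rule sum_mono)
      fix j assume j: "j \<in> ?I"
      have "norm (\<Phi> j) / cc g j = norm (\<Phi>0 (\<pi> j)) / (t * cc g j)"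
        unfolding \<Phi>_def using as[of j] t by (simp add: abs_mult)
      also have "\<dots> \<le> (cc g0 (\<pi> j) / r0) / (t * cc g j)"
        using H0[OF \<pi>in[OF j]] t cc_pos[of g j] by (intro divide_right_mono) auto
      also have "\<dots> = 1 / (t * r0) * (1 / q j)"
        unfolding q_def using t r0pos cc_pos[of g j] cc_pos[of g0 "\<pi> j"] by (simp add: field_simps)
      finally show "norm (\<Phi> j) / cc g j \<le> 1 / (t * r0) * (1 / q j)" .
    qed
    also have "\<dots> = 1 / (t * r0) * Z" unfolding Z_def by (simp add: sum_distrib_left)
    finally show ?thesis using t r0pos by (simp add: mult_left_mono)
  qed
  have XZ: "X * Z \<le> 25/16 * (real ?n)^2"
    using kant[of ?I q] qb unfolding X_def Z_def by simp
  have p2: "0 < 2 / NT" using NT by simp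
  then have prT: "0 < rT" using NT by linarith
  have "RT / rT \<le> RT / (2 / NT)"
    by (rule divide_left_mono[OF NT(2) RT0 mult_pos_pos[OF prT p2]])
  also have "\<dots> = RT * NT / 2" by simp
  also have "\<dots> \<le> (t * R0 * X) * (5/2 / (t * r0) * Z) / 2"
  proof -
    have "0 \<le> t * R0 * X" using t R00 X0 by simp
    then have "RT * NT \<le> (t * R0 * X) * (5/2 / (t * r0) * Z)"
      using mult_mono[OF RTb NTb] NT(1) by simp
    then show ?thesis by simp
  qed
  also have "\<dots> = 5/4 * (R0 / r0) * (X * Z)" using t r0pos by (simp add: field_simps)
  also have "\<dots> \<le> 5/4 * (R0 / r0) * (25/16 * (real ?n)^2)"
  proof -
    have "0 \<le> 5/4 * (R0 / r0)" using R00 r0pos by simp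
    from mult_left_mono[OF XZ this] show ?thesis .
  qed
  also have "\<dots> = (125/64 * (real ?n)^2) * (R0 / r0)" by simp
  also have "\<dots> \<le> (2 * real ?n * (real ?n + sqrt 2 - 1)) * (R0 / r0)"
  proof -
    have "1 \<le> sqrt (2::real)" by simp
    then have a: "2 * real ?n * real ?n \<le> 2 * real ?n * (real ?n + sqrt 2 - 1)"
      by (intro mult_left_mono) auto
    have b: "125/64 * (real ?n)^2 \<le> 2 * real ?n * real ?n" by (simp add: power2_eq_square)
    have "0 \<le> R0 / r0" using R00 r0pos by simp
    moreover have "125/64 * (real ?n)^2 \<le> 2 * real ?n * (real ?n + sqrt 2 - 1)" using a b by linarith
    ultimately show ?thesis using mult_right_mono by blast
  qed
  finally show ?thesis unfolding shape_ratio_def RT_def rT_def R0_def r0_def .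
qed

end
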